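(* Let $m\ge 1$ and let \[ A=\begin{pmatrix} D & p\\ q^{T} & \delta\end{pmatrix}\in\mathbb{C}^{(m+1)\times(m+1)}, \] where $D=\operatorname{diag}(d_1,\ldots,d_m)$, $p,q\in\mathbb{C}^m$, $\delta\in\mathbb{C}$, and suppose $A$ is similar to $\Lambda=\operatorname{diag}(\lambda_1,\ldots,\lambda_{m+1})$, where the numbers $d_1,\ldots,d_m,\lambda_1,\ldots,\lambda_{m+1}$ are pairwise distinct. Define \[ Z^{-1}=\begin{bmatrix}-\operatorname{diag}(p)\operatorname{Cauchy}(D,\Lambda)\\ \mathbf{ones}\end{bmatrix},\qquad \Pi=-\operatorname{Cauchy}(\Lambda,D)\operatorname{diag}(q)\operatorname{diag}(p)\operatorname{Cauchy}(D,\Lambda)+\mathbf{ones}, \] where in $Z^{-1}$ the symbol $\mathbf{ones}$ is the $1\times(m+1)$ row of ones and in $\Pi$ it is the $(m+1)\times(m+1)$ all-ones matrix. Then $\Pi$ is diagonal, with $\Pi_{ij}=0$ for $i\ne j$ and \[ \Pi_{jj}=1+\sum_{i=1}^m\frac{p_iq_i}{(\lambda_j-d_i)^2}=1-\sum_{i=1}^m\frac{\prod_{k=1}^{m+1}(d_i-\lambda_k)}{(\lambda_j-d_i)^2\prod_{k\ne i}(d_i-d_k)} \] (so $\Pi$ depends only on the $d_i$ and $\lambda_j$, not on $p,q$); the matrix $Z^{-1}$ is invertible with inverse \[ Z=\Pi^{-1}\bigl[\operatorname{Cauchy}(\Lambda,D)\operatorname{diag}(q),\ \mathbf{ones}\bigr]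 \] (here $\mathbf{ones}$ is the $(m+1)\times 1$ column of ones), and $A=Z^{-1}\Lambda Z$.
   Context: For diagonal matrices $D=\operatorname{diag}(d_1,\ldots,d_m)$ and $\Lambda=\operatorname{diag}(\lambda_1,\ldots,\lambda_{m+1})$ with $d_i\neq\lambda_j$, $\operatorname{Cauchy}(D,\Lambda)$ is the $m\times(m+1)$ matrix with entries $\operatorname{Cauchy}(D,\Lambda)_{ij}=(d_i-\lambda_j)^{-1}$, and $\operatorname{Cauchy}(\Lambda,D)$ is the $(m+1)\times m$ matrix with entries $(\lambda_i-d_j)^{-1}$. For a vector $v$, $\operatorname{diag}(v)$ is the diagonal matrix with diagonal $v$. $\mathbf{ones}$ denotes an array all of whose entries are $1$, of the shape indicated. *)

theory Defs
  imports Complex_Main "Jordan_Normal_Form.Matrix"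
begin

(* Indices are 0-based: d i for i < m, lam j for j < m+1. *)

definition cauchy_mat :: "nat \<Rightarrow> nat \<Rightarrow> (nat \<Rightarrow> complex) \<Rightarrow> (nat \<Rightarrow> complex) \<Rightarrow> complex mat" where
  "cauchy_mat r c x y = mat r c (\<lambda>(i,j). 1 / (x i - y j))"

definition ones_mat :: "nat \<Rightarrow> nat \<Rightarrow> complex mat" where
  "ones_mat r c = mat r c (\<lambda>_. 1)"

definition stack_rows :: "'a mat \<Rightarrow> 'a mat \<Rightarrow> 'a mat" where
  "stack_rows X Y = mat (dim_row X + dim_row Y) (dim_col X)
     (\<lambda>(i,j). if i < dim_row X then X $$ (i,j) else Y $$ (i - dim_row X, j))"

definition stack_cols :: "'a mat \<Rightarrow> 'a mat \<Rightarrow> 'a mat" where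
  "stack_cols X Y = mat (dim_row X) (dim_col X + dim_col Y)
     (\<lambda>(i,j). if j < dim_col X then X $$ (i,j) else Y $$ (i, j - dim_col X))"

end

theory Submission
  imports Defs "Jordan_Normal_Form.Determinant" "HOL-Computational_Algebra.Polynomial"
begin

lemma sum_Suc_split: "(\<Sum>l\<in>{0..<Suc m}. f l) = (\<Sum>l<m. f l) + (f m :: 'a::comm_monoid_add)"
  by (simp add: atLeast0LessThan)

lemma A_entry:
  fixes d p q :: "nat \<Rightarrow> complex"
  assumes "i < m+1" "l < m+1"
  shows "four_block_mat (mat_diag m d) (mat m 1 (\<lambda>(i,_). p i))
                           (mat 1 m (\<lambda>(_,j). q j)) (mat 1 1 (\<lambda>_. \<delta>)) $$ (i,l)
    = (if i < m then (if l < m then (if i = l then d i else 0) else p i)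
       else (if l < m then q l else \<delta>))"
  using assms by (auto simp: mat_diag_def)

lemma Zinv_entry:
  assumes "i < m+1" "k < m+1"
  shows "stack_rows (- (mat_diag m p * cauchy_mat m (m+1) d lam)) (ones_mat 1 (m+1)) $$ (i,k)
     = (if i < m then - p i / (d i - lam k) else 1)"
  using assms by (auto simp: stack_rows_def mat_diag_mult_left[of _ m "m+1"] cauchy_mat_def ones_mat_def)

lemma Zinv_carrier:
  "stack_rows (- (mat_diag m p * cauchy_mat m (m+1) d lam)) (ones_mat 1 (m+1)) \<in> carrier_mat (m+1) (m+1)"
  by (auto simp: stack_rows_def cauchy_mat_def ones_mat_def mat_diag_def)

lemma W_entry:
  assumes "j < m+1" "i < m+1"
  shows "stack_cols (cauchy_mat (m+1) m lam d * mat_diag m q) (ones_mat (m+1) 1) $$ (j,i)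
     = (if i < m then q i / (lam j - d i) else 1)"
  using assms by (auto simp: stack_cols_def mat_diag_mult_right[of _ "m+1" m] cauchy_mat_def ones_mat_def)

lemma W_carrier:
  "stack_cols (cauchy_mat (m+1) m lam d * mat_diag m q) (ones_mat (m+1) 1) \<in> carrier_mat (m+1) (m+1)"
  by (auto simp: stack_cols_def cauchy_mat_def ones_mat_def mat_diag_def)

lemma div_helper: "(x::complex) / (a*b) = - (x/a * (1/(c - e)))" if "b = e - c"
  using that by (metis divide_divide_eq_left divide_minus_right minus_diff_eq times_divide_eq_right mult.right_neutral)

lemma mult_entry: "A \<in> carrier_mat n k \<Longrightarrow> B \<in> carrier_mat k n' \<Longrightarrow> i < n \<Longrightarrow> j < n'
   \<Longrightarrow> (A * B) $$ (i,j) = (\<Sum>l<k. A $$ (i,l) * B $$ (l,j))"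
  by (auto simp: scalar_prod_def atLeast0LessThan intro!: sum.cong)

lemma mat_diag_cong: "(\<And>i. i < n \<Longrightarrow> f i = g i) \<Longrightarrow> mat_diag n f = mat_diag n g"
  by (auto simp: mat_diag_def intro!: eq_matI)

lemma inv_swap: "inverse ((x::complex) - y) = - inverse (y - x)"
  by (metis inverse_minus_eq minus_diff_eq)

lemma PP_entry:
  fixes p q d lam :: "nat \<Rightarrow> complex"
  assumes "j < m+1" "k < m+1"
  shows "(- (cauchy_mat (m+1) m lam d * mat_diag m q * mat_diag m p * cauchy_mat m (m+1) d lam)
                  + ones_mat (m+1) (m+1)) $$ (j,k) = 1 + (\<Sum>i<m. q i / (lam j - d i) * (- p i / (d i - lam k)))"
proof -
  have e: "cauchy_mat (m+1) m lam d * mat_diag m q * mat_diag m p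
     = mat (m+1) m (\<lambda>(j,i). q i * p i / (lam j - d i))"
    apply (subst assoc_mult_mat[of _ "m+1" m _ m _ m])
       apply (auto simp: cauchy_mat_def)[3]
    apply (subst mat_diag_diag)
    apply (subst mat_diag_mult_right[of _ "m+1"])
     apply (auto simp: cauchy_mat_def)
    done
  have "(\<Sum>i<m. q i / (lam j - d i) * (- p i / (d i - lam k))) = - (\<Sum>i<m. q i * p i / (lam j - d i) * (1 / (d i - lam k)))"
    unfolding sum_negf[symmetric]
    by (rule sum.cong) (auto simp: divide_inverse algebra_simps)
  then show ?thesis using assms unfolding e
    by (simp add: cauchy_mat_def ones_mat_def scalar_prod_def atLeast0LessThan)
qed

lemma secular_poly:
  fixes d lam c :: "nat \<Rightarrow> complex" and \<delta> :: complex
  assumes injd: "inj_on d {..<m}" and injl: "inj_on lam {..<m+1}"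
    and dl: "\<forall>i<m. \<forall>j<m+1. d i \<noteq> lam j"
    and sec: "\<And>j. j<m+1 \<Longrightarrow> (\<Sum>i<m. c i / (lam j - d i)) = lam j - \<delta>"
    and i: "i < m"
  shows "c i = - (\<Prod>k<m+1. d i - lam k) / (\<Prod>k\<in>{..<m}-{i}. d i - d k)"
proof -
  define Qd where "Qd = (\<Prod>k<m. [:- d k, 1:])"
  define S where "S = (\<Sum>l<m. smult (c l) (\<Prod>k\<in>{..<m}-{l}. [:- d k, 1:]))"
  define G where "G = [:-\<delta>, 1:] * Qd - S"
  define PL where "PL = (\<Prod>k<m+1. [:- lam k, 1:])"
  have degQd: "degree Qd = m" unfolding Qd_def by (subst degree_prod_eq_sum_degree) auto
  have lcQd: "lead_coeff Qd = 1" unfolding Qd_def by (simp add: lead_coeff_prod)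
  have Qd0: "Qd \<noteq> 0" using lcQd by auto
  have degPL: "degree PL = m+1" unfolding PL_def by (subst degree_prod_eq_sum_degree) auto
  have lcPL: "lead_coeff PL = 1" unfolding PL_def lead_coeff_prod by simp
  have deg1: "degree ([:-\<delta>,1:] * Qd) = m+1" using Qd0 by (subst degree_mult_eq) (auto simp: degQd)
  have lc1: "coeff ([:-\<delta>,1:] * Qd) (m+1) = 1"
    using lead_coeff_mult[of "[:-\<delta>,1:]" Qd] deg1 lcQd by simp
  have degS: "degree S \<le> m" unfolding S_def
  proof (rule degree_sum_le)
    fix l assume "l \<in> {..<m}"
    have "degree (\<Prod>k\<in>{..<m}-{l}. [:- d k, 1:]) = card ({..<m}-{l})"
      by (subst degree_prod_eq_sum_degree) auto
    also have "\<dots> \<le> m" by (metis card_Diff1_le card_lessThan finite_lessThan)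
    finally show "degree (smult (c l) (\<Prod>k\<in>{..<m}-{l}. [:- d k, 1:])) \<le> m"
      by (meson degree_smult_le order_trans)
  qed simp
  have cS: "coeff S (m+1) = 0" using degS by (intro coeff_eq_0) auto
  have degG: "degree G \<le> m+1" unfolding G_def using deg1 degS by (intro degree_diff_le) auto
  have cG: "coeff G (m+1) = 1" unfolding G_def using lc1 cS by simp
  have cPL: "coeff PL (m+1) = 1" using lcPL degPL by simp
  have roots: "poly G z = poly PL z" if z: "z \<in> lam ` {..<m+1}" for z
  proof -
    from z obtain j where j: "j < m+1" "z = lam j" by auto
    define QQ where "QQ = (\<Prod>k<m. lam j - d k)"
    have "poly PL z = 0" unfolding PL_def poly_prod using j
      by (subst prod_zero_iff) (auto intro!: bexI[of _ j] simp del: prod.lessThan_Suc)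
    have rem: "(\<Prod>k\<in>{..<m}-{l}. lam j - d k) = QQ / (lam j - d l)" if l: "l < m" for l
    proof -
      have "QQ = (lam j - d l) * (\<Prod>k\<in>{..<m}-{l}. lam j - d k)"
        unfolding QQ_def using l by (subst prod.remove[of _ l]) auto
      moreover have "lam j - d l \<noteq> 0" using dl l j by (metis eq_iff_diff_eq_0)
      ultimately show ?thesis by (simp add: field_simps)
    qed
    have "poly G z = (lam j - \<delta>) * QQ - (\<Sum>l<m. c l * (QQ / (lam j - d l)))"
      unfolding G_def S_def Qd_def QQ_def[symmetric] poly_diff poly_mult poly_sum poly_smult poly_prod
      using j rem QQ_def by (auto intro!: sum.cong)
    also have "\<dots> = QQ * ((lam j - \<delta>) - (\<Sum>l<m. c l / (lam j - d l)))"
      by (simp add: algebra_simps sum_distrib_left)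
    also have "\<dots> = 0" using sec[OF j(1)] by simp
    finally show ?thesis using \<open>poly PL z = 0\<close> by simp
  qed
  have cardL: "card (lam ` {..<m+1}) = m+1" using injl by (simp add: card_image)
  have GP: "G = PL"
    by (rule poly_eqI_degree_lead_coeff[of G "m+1" PL "lam ` {..<m+1}"])
       (use cG cPL cardL degG degPL roots in auto)
  have pd: "poly Qd (d i) = 0" unfolding Qd_def poly_prod using i by (auto intro!: bexI[of _ i])
  have "poly S (d i) = c i * (\<Prod>k\<in>{..<m}-{i}. d i - d k)"
  proof -
    have "poly S (d i) = (\<Sum>l<m. c l * (\<Prod>k\<in>{..<m}-{l}. d i - d k))"
      unfolding S_def poly_sum poly_smult poly_prod by simp
    also have "\<dots> = c i * (\<Prod>k\<in>{..<m}-{i}. d i - d k) + (\<Sum>l\<in>{..<m}-{i}. c l * (\<Prod>k\<in>{..<m}-{l}. d i - d k))"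
      using i by (subst sum.remove[of _ i]) auto
    also have "(\<Sum>l\<in>{..<m}-{i}. c l * (\<Prod>k\<in>{..<m}-{l}. d i - d k)) = 0"
      by (rule sum.neutral) (use i in \<open>auto intro!: bexI[of _ i]\<close>)
    finally show ?thesis by simp
  qed
  hence "- (c i * (\<Prod>k\<in>{..<m}-{i}. d i - d k)) = (\<Prod>k<m+1. d i - lam k)"
    using arg_cong[OF GP, of "\<lambda>P. poly P (d i)"] pd unfolding G_def PL_def poly_prod by simp
  moreover have "(\<Prod>k\<in>{..<m}-{i}. d i - d k) \<noteq> 0"
    using injd i by (auto simp: inj_on_def)
  ultimately show ?thesis by (simp add: field_simps)
qed

theorem mainTheorem2:
  fixes m :: nat and d lam p q :: "nat \<Rightarrow> complex" and \<delta> :: complex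
  assumes "m \<ge> 1"
    and "inj_on d {..<m}"
    and "inj_on lam {..<m+1}"
    and "\<forall>i<m. \<forall>j<m+1. d i \<noteq> lam j"
    and "similar_mat
           (four_block_mat (mat_diag m d) (mat m 1 (\<lambda>(i,_). p i))
                           (mat 1 m (\<lambda>(_,j). q j)) (mat 1 1 (\<lambda>_. \<delta>)))
           (mat_diag (m+1) lam)"
  shows "let A = four_block_mat (mat_diag m d) (mat m 1 (\<lambda>(i,_). p i))
                   (mat 1 m (\<lambda>(_,j). q j)) (mat 1 1 (\<lambda>_. \<delta>));
             LL = mat_diag (m+1) lam;
             Zinv = stack_rows (- (mat_diag m p * cauchy_mat m (m+1) d lam)) (ones_mat 1 (m+1));
             PP = - (cauchy_mat (m+1) m lam d * mat_diag m q * mat_diag m p * cauchy_mat m (m+1) d lam)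
                  + ones_mat (m+1) (m+1)
         in PP \<in> carrier_mat (m+1) (m+1) \<and> diagonal_mat PP
            \<and> (\<forall>j<m+1. PP $$ (j,j) = 1 + (\<Sum>i<m. p i * q i / (lam j - d i)^2))
            \<and> (\<forall>j<m+1. PP $$ (j,j) = 1 - (\<Sum>i<m. (\<Prod>k<m+1. d i - lam k)
                         / ((lam j - d i)^2 * (\<Prod>k\<in>{..<m} - {i}. d i - d k))))
            \<and> invertible_mat PP \<and> invertible_mat Zinv
            \<and> (\<forall>Pinv. Pinv \<in> carrier_mat (m+1) (m+1) \<and> PP * Pinv = 1\<^sub>m (m+1) \<and> Pinv * PP = 1\<^sub>m (m+1) \<longrightarrow>
                 (let Z = Pinv * stack_cols (cauchy_mat (m+1) m lam d * mat_diag m q) (ones_mat (m+1) 1)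
                  in Zinv * Z = 1\<^sub>m (m+1) \<and> Z * Zinv = 1\<^sub>m (m+1) \<and> A = Zinv * LL * Z))"
  
proof -
  define A where "A = four_block_mat (mat_diag m d) (mat m 1 (\<lambda>(i,_). p i))
                   (mat 1 m (\<lambda>(_,j). q j)) (mat 1 1 (\<lambda>_. \<delta>))"
  define LL where "LL = mat_diag (m+1) lam"
  define Zinv where "Zinv = stack_rows (- (mat_diag m p * cauchy_mat m (m+1) d lam)) (ones_mat 1 (m+1))"
  define PP where "PP = - (cauchy_mat (m+1) m lam d * mat_diag m q * mat_diag m p * cauchy_mat m (m+1) d lam)
                  + ones_mat (m+1) (m+1)"
  define W where "W = stack_cols (cauchy_mat (m+1) m lam d * mat_diag m q) (ones_mat (m+1) 1)"
  define zz where "zz = (\<lambda>i k. if i < m then - p i / (d i - lam k) else 1)"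
  define ww where "ww = (\<lambda>j i. if i < m then q i / (lam j - d i) else 1)"
  have Ac: "A \<in> carrier_mat (m+1) (m+1)" unfolding A_def by (rule four_block_carrier_mat) auto
  have LLc: "LL \<in> carrier_mat (m+1) (m+1)" unfolding LL_def by simp
  have Zc: "Zinv \<in> carrier_mat (m+1) (m+1)" unfolding Zinv_def by (rule Zinv_carrier)
  have Wc: "W \<in> carrier_mat (m+1) (m+1)" unfolding W_def by (rule W_carrier)
  have PPc: "PP \<in> carrier_mat (m+1) (m+1)" unfolding PP_def by (auto simp: ones_mat_def)
  have Aent: "\<And>i l. i < m+1 \<Longrightarrow> l < m+1 \<Longrightarrow> A $$ (i,l) = (if i < m then (if l < m then (if i = l then d i else 0) else p i)
       else (if l < m then q l else \<delta>))" unfolding A_def by (rule A_entry)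
  have Zent: "\<And>i k. i < m+1 \<Longrightarrow> k < m+1 \<Longrightarrow> Zinv $$ (i,k) = zz i k"
    unfolding Zinv_def zz_def by (rule Zinv_entry)
  have Went: "\<And>j i. j < m+1 \<Longrightarrow> i < m+1 \<Longrightarrow> W $$ (j,i) = ww j i"
    unfolding W_def ww_def by (rule W_entry)
  from similar_matD[OF assms(5)[folded A_def LL_def]] obtain n P Q where
    PQ: "{A,LL,P,Q} \<subseteq> carrier_mat n n" "P * Q = 1\<^sub>m n" "Q * P = 1\<^sub>m n" "A = P * LL * Q" by blast
  have n: "n = m+1" using PQ(1) Ac by auto
  have Pc: "P \<in> carrier_mat (m+1) (m+1)" and Qc: "Q \<in> carrier_mat (m+1) (m+1)" using PQ(1) n by auto
  have QP: "Q * P = 1\<^sub>m (m+1)" and PQ1: "P * Q = 1\<^sub>m (m+1)" using PQ n by auto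
  have AP: "A * P = P * LL"
  proof -
    have "A * P = P * LL * Q * P" using PQ(4) by simp
    also have "\<dots> = P * LL * (Q * P)" using Pc Qc LLc by (intro assoc_mult_mat) auto
    finally show ?thesis using QP Pc LLc by simp
  qed
  have QA: "Q * A = LL * Q"
  proof -
    have "Q * A = Q * (P * LL * Q)" using PQ(4) by simp
    also have "\<dots> = Q * (P * LL) * Q" using Pc Qc LLc by (intro assoc_mult_mat[symmetric]) auto
    also have "Q * (P * LL) = Q * P * LL" using Pc Qc LLc by (intro assoc_mult_mat[symmetric]) auto
    finally show ?thesis using QP Qc LLc by simp
  qed
  have Pcol: "P $$ (i,j) = P $$ (m,j) * zz i j" if i: "i < m+1" and j: "j < m+1" for i j
  proof (cases "i < m")
    case True
    have "(A * P) $$ (i,j) = (\<Sum>l<m+1. A $$ (i,l) * P $$ (l,j))" using Ac Pc i j by (intro mult_entry)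
    also have "\<dots> = (\<Sum>l<m. A $$ (i,l) * P $$ (l,j)) + A $$ (i,m) * P $$ (m,j)" by simp
    also have "(\<Sum>l<m. A $$ (i,l) * P $$ (l,j)) = (\<Sum>l<m. if l = i then d i * P $$ (i,j) else 0)"
      by (rule sum.cong) (use True in \<open>auto simp: Aent\<close>)
    also have "\<dots> = d i * P $$ (i,j)" using True by simp
    also have "A $$ (i,m) = p i" using True by (simp add: Aent)
    finally have e1: "(A * P) $$ (i,j) = d i * P $$ (i,j) + p i * P $$ (m,j)" by simp
    have "(P * LL) $$ (i,j) = P $$ (i,j) * lam j"
      unfolding LL_def using Pc i j by (subst mat_diag_mult_right[of _ "m+1"]) auto
    with e1 AP have "d i * P $$ (i,j) + p i * P $$ (m,j) = P $$ (i,j) * lam j" by simp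
    moreover have "d i - lam j \<noteq> 0" using assms(4) True j by auto
    ultimately show ?thesis using True unfolding zz_def by (simp add: field_simps)
  next
    case False
    then have "i = m" using i by simp
    then show ?thesis unfolding zz_def by simp
  qed
  have Qrow: "Q $$ (j,i) = Q $$ (j,m) * ww j i" if i: "i < m+1" and j: "j < m+1" for i j
  proof (cases "i < m")
    case True
    have "(Q * A) $$ (j,i) = (\<Sum>l<m+1. Q $$ (j,l) * A $$ (l,i))" using Ac Qc i j by (intro mult_entry)
    also have "\<dots> = (\<Sum>l<m. Q $$ (j,l) * A $$ (l,i)) + Q $$ (j,m) * A $$ (m,i)" by simp
    also have "(\<Sum>l<m. Q $$ (j,l) * A $$ (l,i)) = (\<Sum>l<m. if l = i then d i * Q $$ (j,i) else 0)"
      by (rule sum.cong) (use True in \<open>auto simp: Aent\<close>)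
    also have "\<dots> = d i * Q $$ (j,i)" using True by simp
    also have "A $$ (m,i) = q i" using True by (simp add: Aent)
    finally have e1: "(Q * A) $$ (j,i) = d i * Q $$ (j,i) + q i * Q $$ (j,m)" by (simp add: mult.commute)
    have "(LL * Q) $$ (j,i) = lam j * Q $$ (j,i)"
      unfolding LL_def using Qc i j by (subst mat_diag_mult_left[of _ "m+1"]) auto
    with e1 QA have "d i * Q $$ (j,i) + q i * Q $$ (j,m) = lam j * Q $$ (j,i)" by simp
    moreover have "lam j - d i \<noteq> 0" using assms(4) True j by (metis eq_iff_diff_eq_0)
    ultimately show ?thesis using True unfolding ww_def by (simp add: field_simps)
  next
    case False
    then have "i = m" using i by simp
    then show ?thesis unfolding ww_def by simp
  qed
  define a where "a = (\<lambda>j. P $$ (m,j))"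
  define b where "b = (\<lambda>j. Q $$ (j,m))"
  have WZ: "(W * Zinv) $$ (j,k) = (\<Sum>l<m+1. ww j l * zz l k)" if "j < m+1" "k < m+1" for j k
    unfolding mult_entry[OF Wc Zc that] by (rule sum.cong) (use that in \<open>auto simp: Went Zent\<close>)
  have QPe: "(Q * P) $$ (j,k) = b j * a k * (W * Zinv) $$ (j,k)" if jk: "j < m+1" "k < m+1" for j k
  proof -
    have "(Q * P) $$ (j,k) = (\<Sum>l<m+1. Q $$ (j,l) * P $$ (l,k))" using Qc Pc jk by (intro mult_entry)
    also have "\<dots> = (\<Sum>l<m+1. b j * a k * (ww j l * zz l k))"
    proof (rule sum.cong)
      fix l assume "l \<in> {..<m+1}"
      hence l: "l < m+1" by simp
      show "Q $$ (j,l) * P $$ (l,k) = b j * a k * (ww j l * zz l k)"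
        unfolding Qrow[OF l jk(1)] Pcol[OF l jk(2)] a_def b_def by (simp add: algebra_simps)
    qed simp
    finally show ?thesis by (simp only: WZ[OF jk] sum_distrib_left)
  qed
  have QPid: "(Q * P) $$ (j,k) = (if j = k then 1 else 0)" if "j < m+1" "k < m+1" for j k
    using QP that by simp
  have a0: "a j \<noteq> 0" and b0: "b j \<noteq> 0" if "j < m+1" for j
    using QPe[OF that that] QPid[OF that that] by auto
  have PPWZ: "PP = W * Zinv"
  proof (rule eq_matI)
    fix j k assume jk: "j < dim_row (W * Zinv)" "k < dim_col (W * Zinv)"
    hence jk': "j < m+1" "k < m+1" using Wc Zc by auto
    show "PP $$ (j,k) = (W * Zinv) $$ (j,k)"
    proof -
      have "(\<Sum>l<m+1. ww j l * zz l k) = (\<Sum>l<m. ww j l * zz l k) + 1" by (simp add: ww_def zz_def)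
      also have "(\<Sum>l<m. ww j l * zz l k) = (\<Sum>l<m. q l / (lam j - d l) * (- p l / (d l - lam k)))"
        by (rule sum.cong) (auto simp: ww_def zz_def)
      finally show ?thesis unfolding PP_def WZ[OF jk'] PP_entry[OF jk'] by simp
    qed
  qed (use PPc Wc Zc in auto)
  have PPent: "PP $$ (j,k) = (if j = k then 1 / (a j * b j) else 0)" if jk: "j < m+1" "k < m+1" for j k
    using QPe[OF jk] QPid[OF jk] a0[OF jk(1)] b0[OF jk(1)] a0[OF jk(2)] unfolding PPWZ
    by (auto simp: field_simps)
  have PPdiag: "PP = mat_diag (m+1) (\<lambda>j. 1 / (a j * b j))"
    by (rule eq_matI) (use PPc in \<open>auto simp: PPent mat_diag_def\<close>)
  define N0 where "N0 = mat_diag (m+1) (\<lambda>j. a j * b j)"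
  have N0c: "N0 \<in> carrier_mat (m+1) (m+1)" unfolding N0_def by simp
  have PPN0: "PP * N0 = 1\<^sub>m (m+1)" unfolding PPdiag N0_def mat_diag_diag
    by (subst mat_diag_cong[where g = "\<lambda>_. 1"]) (auto simp: a0 b0)
  have N0PP: "N0 * PP = 1\<^sub>m (m+1)" unfolding PPdiag N0_def mat_diag_diag
    by (subst mat_diag_cong[where g = "\<lambda>_. 1"]) (auto simp: a0 b0)
  have invPP: "invertible_mat PP"
    unfolding invertible_mat_def inverts_mat_def square_mat.simps
    using PPc N0c PPN0 N0PP by (intro conjI exI[of _ N0]) auto
  define N1 where "N1 = N0 * W"
  have N1c: "N1 \<in> carrier_mat (m+1) (m+1)" unfolding N1_def using N0c Wc by simp
  have N1Z: "N1 * Zinv = 1\<^sub>m (m+1)"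
    unfolding N1_def using N0c Wc Zc N0PP PPWZ by (subst assoc_mult_mat[of _ "m+1" "m+1"]) auto
  have ZN1: "Zinv * N1 = 1\<^sub>m (m+1)" using mat_mult_left_right_inverse[OF N1c Zc N1Z] .
  have invZ: "invertible_mat Zinv"
    unfolding invertible_mat_def inverts_mat_def square_mat.simps
    using Zc N1c N1Z ZN1 by (intro conjI exI[of _ N1]) auto
  have sec: "(\<Sum>i<m. p i * q i / (lam j - d i)) = lam j - \<delta>" if j: "j < m+1" for j
  proof -
    have "(A * P) $$ (m,j) = (\<Sum>l<m+1. A $$ (m,l) * P $$ (l,j))" using Ac Pc j by (intro mult_entry) auto
    also have "\<dots> = a j * ((\<Sum>l<m. q l * zz l j) + \<delta>)"
    proof -
      have "(\<Sum>l<m+1. A $$ (m,l) * P $$ (l,j)) = (\<Sum>l<m. A $$ (m,l) * P $$ (l,j)) + A $$ (m,m) * P $$ (m,j)" by simp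
      also have "(\<Sum>l<m. A $$ (m,l) * P $$ (l,j)) = (\<Sum>l<m. a j * (q l * zz l j))"
      proof (rule sum.cong)
        fix l assume "l \<in> {..<m}"
        hence l: "l < m" "l < m+1" by auto
        show "A $$ (m,l) * P $$ (l,j) = a j * (q l * zz l j)"
          using Aent[of m l] l unfolding Pcol[OF l(2) j] a_def by simp
      qed simp
      also have "A $$ (m,m) = \<delta>" by (simp add: Aent)
      finally show ?thesis by (simp add: sum_distrib_left a_def algebra_simps)
    qed
    finally have e1: "(A * P) $$ (m,j) = a j * ((\<Sum>l<m. q l * zz l j) + \<delta>)" .
    have "(P * LL) $$ (m,j) = a j * lam j"
      unfolding LL_def a_def using Pc j by (subst mat_diag_mult_right[of _ "m+1"]) auto
    with e1 AP a0[OF j] have "(\<Sum>l<m. q l * zz l j) + \<delta> = lam j" by simp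
    moreover have "(\<Sum>l<m. q l * zz l j) = (\<Sum>i<m. p i * q i / (lam j - d i))"
    proof (rule sum.cong)
      fix i assume "i \<in> {..<m}"
      have "d i - lam j = - (lam j - d i)" by simp
      then show "q i * zz i j = p i * q i / (lam j - d i)" using \<open>i \<in> {..<m}\<close>
        unfolding zz_def by (simp add: divide_inverse inv_swap[of "d i"])
    qed simp
    ultimately show ?thesis by (metis add_diff_cancel_right')
  qed
  have cform: "p i * q i = - (\<Prod>k<m+1. d i - lam k) / (\<Prod>k\<in>{..<m}-{i}. d i - d k)" if "i < m" for i
    by (rule secular_poly[of d m lam "\<lambda>i. p i * q i" \<delta>]) (use assms sec that in auto)
  have f1: "PP $$ (j,j) = 1 + (\<Sum>i<m. p i * q i / (lam j - d i)^2)" if j: "j < m+1" for j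
  proof -
    have "PP $$ (j,j) = 1 + (\<Sum>i<m. q i / (lam j - d i) * (- p i / (d i - lam j)))"
      unfolding PP_def by (rule PP_entry[OF j j])
    also have "(\<Sum>i<m. q i / (lam j - d i) * (- p i / (d i - lam j))) = (\<Sum>i<m. p i * q i / (lam j - d i)^2)"
    proof (rule sum.cong)
      fix i assume "i \<in> {..<m}"
      have e: "d i - lam j = - (lam j - d i)" by simp
      show "q i / (lam j - d i) * (- p i / (d i - lam j)) = p i * q i / (lam j - d i)^2"
        unfolding e minus_divide_divide by (simp add: power2_eq_square times_divide_times_eq mult.commute)
    qed simp
    finally show ?thesis .
  qed
  have f2: "PP $$ (j,j) = 1 - (\<Sum>i<m. (\<Prod>k<m+1. d i - lam k)
                         / ((lam j - d i)^2 * (\<Prod>k\<in>{..<m} - {i}. d i - d k)))" if j: "j < m+1" for j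
  proof -
    have "(\<Sum>i<m. p i * q i / (lam j - d i)^2) = - (\<Sum>i<m. (\<Prod>k<m+1. d i - lam k)
                         / ((lam j - d i)^2 * (\<Prod>k\<in>{..<m} - {i}. d i - d k)))"
      unfolding sum_negf[symmetric]
    proof (rule sum.cong)
      fix i assume "i \<in> {..<m}"
      then show "p i * q i / (lam j - d i)^2 = - ((\<Prod>k<m+1. d i - lam k)
                         / ((lam j - d i)^2 * (\<Prod>k\<in>{..<m} - {i}. d i - d k)))"
        unfolding cform[of i, OF lessThan_iff[THEN iffD1, OF \<open>i \<in> {..<m}\<close>]]
        by (simp add: divide_divide_eq_left mult.commute)
    qed simp
    then show ?thesis using f1[OF j] by simp
  qed
  have diagPP: "diagonal_mat PP" unfolding diagonal_mat_def using PPc by (auto simp: PPent)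
  have Zfac: "Zinv = P * mat_diag (m+1) (\<lambda>k. 1 / a k)"
  proof (rule eq_matI)
    fix i k assume ik: "i < dim_row (P * mat_diag (m+1) (\<lambda>k. 1 / a k))" "k < dim_col (P * mat_diag (m+1) (\<lambda>k. 1 / a k))"
    hence ik': "i < m+1" "k < m+1" using Pc by (auto simp: mat_diag_def)
    show "Zinv $$ (i,k) = (P * mat_diag (m+1) (\<lambda>k. 1 / a k)) $$ (i,k)"
      using ik' Pc a0[OF ik'(2)] Pcol[OF ik'] Zent[OF ik'] unfolding a_def
      by (subst mat_diag_mult_right[of _ "m+1"]) auto
  qed (use Zc Pc in \<open>auto simp: mat_diag_def\<close>)
  have AZ: "A * Zinv = Zinv * LL"
  proof -
    define Dg where "Dg = mat_diag (m+1) (\<lambda>k. 1 / a k)"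
    have Dgc: "Dg \<in> carrier_mat (m+1) (m+1)" unfolding Dg_def by simp
    have "A * Zinv = A * P * Dg" unfolding Zfac Dg_def[symmetric] using Ac Pc Dgc by (simp add: assoc_mult_mat)
    also have "\<dots> = P * (LL * Dg)" unfolding AP using Pc LLc Dgc by (simp add: assoc_mult_mat)
    also have "LL * Dg = Dg * LL" unfolding LL_def Dg_def mat_diag_diag by (simp add: mult.commute)
    also have "P * (Dg * LL) = Zinv * LL" unfolding Zfac Dg_def[symmetric] using Pc LLc Dgc by (simp add: assoc_mult_mat)
    finally show ?thesis .
  qed
  have last: "Zinv * Z = 1\<^sub>m (m+1) \<and> Z * Zinv = 1\<^sub>m (m+1) \<and> A = Zinv * LL * Z"
    if Pinv: "Pinv \<in> carrier_mat (m+1) (m+1)" "PP * Pinv = 1\<^sub>m (m+1)" "Pinv * PP = 1\<^sub>m (m+1)"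
      and Zd: "Z = Pinv * W" for Pinv Z
  proof -
    have Zc': "Z \<in> carrier_mat (m+1) (m+1)" using Zd Pinv Wc by simp
    have ZZ: "Z * Zinv = 1\<^sub>m (m+1)" unfolding Zd using Pinv Wc Zc PPWZ by (simp add: assoc_mult_mat)
    have ZZ2: "Zinv * Z = 1\<^sub>m (m+1)" using mat_mult_left_right_inverse[OF Zc' Zc ZZ] .
    have "Zinv * LL * Z = A * Zinv * Z" using AZ by simp
    also have "\<dots> = A * (Zinv * Z)" using Ac Zc Zc' by (simp add: assoc_mult_mat)
    also have "\<dots> = A" using ZZ2 Ac by simp
    finally show ?thesis using ZZ ZZ2 by simp
  qed
  show ?thesis
    unfolding Let_def A_def[symmetric] LL_def[symmetric] Zinv_def[symmetric] PP_def[symmetric] W_def[symmetric]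
    using PPc diagPP f1 f2 invPP invZ last by blast
qed

end
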